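(* Under the assumptions $\alpha=2$, the far-destination approximation (all relay–destination distances replaced by $d$), and conditioned on $N\ge 1$, the energy harvesting decode-and-forward protocol with a uniformly randomly chosen relay achieves diversity gain $2$: $$-\lim_{P\to\infty}\frac{\log \mathcal{P}_1(P)}{\log P}=2,\qquad \mathcal{P}_1(P)=\mathcal{P}\big(x_0+\eta y_i(x_i-\epsilon)<\epsilon,\ x_i>\epsilon\big)+\mathcal{P}\big(x_0<\epsilon,\ x_i<\epsilon\big).$$
   Context: Source at origin, destination at distance $d>0$; relays form a homogeneous Poisson point process of intensity $\lambda$ in the disc $\mathcal D$ of radius $R_{\mathcal D}$ centred at the source; the chosen relay is uniform in $\mathcal D$ at distance $d_i$ from the source. Fading $h_d,h_i,g_i$ independent $\mathcal{CN}(0,1)$; $x_0=|h_d|^2/(1+d^2)$, $x_i=|h_i|^2/(1+d_i^2)$, $y_i=|g_i|^2/(1+d^2)$. $\tau=2^{2R}-1$ for target rate $R>0$, $\epsilon=\tau/P$ with transmit power $P$, $\eta\in(0,1]$. Relay decodes iff $x_i>\epsilon$, transmits with power $\eta(Px_i-\tau)$; outage when the combined SNR $P(x_0+\eta y_i(x_i-\epsilon))<\tau$. *)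

theory Defs
  imports "HOL-Probability.Probability"
begin

definition CN01 :: "complex measure" where
  "CN01 = density lborel (\<lambda>z. ennreal (exp (- (cmod z)\<^sup>2) / pi))"

text \<open>Uniform distribution of the chosen relay position in the disc of radius RD
  centred at the source (origin).\<close>
definition disc_uniform :: "real \<Rightarrow> complex measure" where
  "disc_uniform RD = uniform_measure lborel (cball 0 RD)"

text \<open>Joint law of (h_d, h_i, g_i, relay position), all independent.\<close>
definition relay_space :: "real \<Rightarrow> (complex \<times> complex \<times> complex \<times> complex) measure" where
  "relay_space RD = CN01 \<Otimes>\<^sub>M (CN01 \<Otimes>\<^sub>M (CN01 \<Otimes>\<^sub>M disc_uniform RD))"

definition x0 :: "real \<Rightarrow> complex \<times> complex \<times> complex \<times> complex \<Rightarrow> real" where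
  "x0 d \<omega> = (cmod (fst \<omega>))\<^sup>2 / (1 + d\<^sup>2)"

definition xi :: "complex \<times> complex \<times> complex \<times> complex \<Rightarrow> real" where
  "xi \<omega> = (cmod (fst (snd \<omega>)))\<^sup>2 / (1 + (cmod (snd (snd (snd \<omega>))))\<^sup>2)"

text \<open>Far-destination approximation: relay-destination distance replaced by d.\<close>
definition yi :: "real \<Rightarrow> complex \<times> complex \<times> complex \<times> complex \<Rightarrow> real" where
  "yi d \<omega> = (cmod (fst (snd (snd \<omega>))))\<^sup>2 / (1 + d\<^sup>2)"

definition outage1 :: "real \<Rightarrow> real \<Rightarrow> real \<Rightarrow> real \<Rightarrow> real \<Rightarrow> real" where
  "outage1 d RD \<eta> Rt P =
     (let \<tau> = 2 powr (2 * Rt) - 1; \<epsilon> = \<tau> / P in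
       measure (relay_space RD)
         {\<omega>. x0 d \<omega> + \<eta> * yi d \<omega> * (xi \<omega> - \<epsilon>) < \<epsilon> \<and> xi \<omega> > \<epsilon>}
     + measure (relay_space RD) {\<omega>. x0 d \<omega> < \<epsilon> \<and> xi \<omega> < \<epsilon>})"

end

theory Submission
  imports Defs "HOL-Real_Asymp.Real_Asymp"
begin

lemma gauss1: "(\<integral>\<^sup>+x. ennreal (exp (- x\<^sup>2) / sqrt pi) \<partial>lborel) = 1"
proof -
  interpret p: prob_space "density lborel (normal_density 0 (1/sqrt 2))"
    using prob_space_normal_density[of "1/sqrt 2" 0] by (simp add: prod_ennreal)
  have eq: "normal_density 0 (1/sqrt 2) x = exp (- x\<^sup>2) / sqrt pi" for x
    by (simp add: normal_density_def power_divide real_sqrt_divide)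
  have "emeasure (density lborel (normal_density 0 (1/sqrt 2))) UNIV = 1"
    using p.emeasure_space_1 by simp
  then show ?thesis by (simp add: emeasure_density eq)
qed

lemma CN01_prob: "prob_space CN01"
proof
  have "emeasure CN01 (space CN01) = (\<integral>\<^sup>+z. ennreal (exp (- (cmod z)\<^sup>2) / pi) \<partial>lborel)"
    by (simp add: CN01_def emeasure_density)
  also have "\<dots> = (\<integral>\<^sup>+z. ennreal (\<Prod>b\<in>Basis. (exp (- ((z::complex) \<bullet> b)\<^sup>2) / sqrt pi)) \<partial>lborel)"
  proof (intro nn_integral_cong)
    fix z :: complex
    have "(cmod z)\<^sup>2 = (Re z)\<^sup>2 + (Im z)\<^sup>2" by (simp add: cmod_def)
    then show "ennreal (exp (- (cmod z)\<^sup>2) / pi) = ennreal (\<Prod>b\<in>Basis. (exp (- (z \<bullet> b)\<^sup>2) / sqrt pi))"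
      by (simp add: Basis_complex_def inner_complex_def exp_add[symmetric] field_simps)
  qed
  also have "\<dots> = (\<Prod>b\<in>(Basis::complex set). (\<integral>\<^sup>+x. ennreal (exp (- x\<^sup>2) / sqrt pi) \<partial>lborel))"
    using nn_integral_lborel_prod[where 'a=complex, of "\<lambda>b x. exp (- x\<^sup>2) / sqrt pi"] by (simp add: prod_ennreal)
  also have "\<dots> = 1" by (simp add: gauss1)
  finally show "emeasure CN01 (space CN01) = 1" .
qed

lemma uv2: "unit_ball_vol 2 = pi"
  using unit_ball_vol_numeral(1)[of Num.One] by simp
lemma ball_vol_c: "s \<ge> 0 \<Longrightarrow> emeasure lborel (ball (0::complex) (sqrt s)) = ennreal (pi * s)"
  by (subst emeasure_ball) (auto simp: uv2)

lemma set_sq: assumes "s \<ge> 0" shows "{z::complex. (cmod z)\<^sup>2 < s} = ball 0 (sqrt s)"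
proof -
  have *: "cmod z < sqrt s \<longleftrightarrow> (cmod z)\<^sup>2 < s" for z
  proof
    assume "cmod z < sqrt s" then have "(cmod z)\<^sup>2 < (sqrt s)\<^sup>2" by (intro power_strict_mono) auto
    then show "(cmod z)\<^sup>2 < s" using \<open>s \<ge> 0\<close> by simp
  next
    assume "(cmod z)\<^sup>2 < s" then show "cmod z < sqrt s" by (rule real_less_rsqrt)
  qed
  show ?thesis
  proof (rule set_eqI)
    fix z :: complex show "z \<in> {z. (cmod z)\<^sup>2 < s} \<longleftrightarrow> z \<in> ball 0 (sqrt s)"
      using *[of z] by (simp add: dist_norm)
  qed
qed

lemma CN01_upper: assumes "s \<ge> 0" shows "emeasure CN01 {z. (cmod z)\<^sup>2 < s} \<le> ennreal s"
proof -
  have "emeasure CN01 {z. (cmod z)\<^sup>2 < s} = (\<integral>\<^sup>+(z::complex). ennreal (exp (- (cmod z)\<^sup>2) / pi) * indicator (ball 0 (sqrt s)) z \<partial>lborel)"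
    using assms by (simp add: CN01_def emeasure_density set_sq)
  also have "\<dots> \<le> (\<integral>\<^sup>+(z::complex). ennreal (1 / pi) * indicator (ball 0 (sqrt s)) z \<partial>lborel)"
  proof (intro nn_integral_mono)
    fix z :: complex
    have "exp (- (cmod z)\<^sup>2) / pi \<le> 1 / pi" by (intro divide_right_mono) auto
    then show "ennreal (exp (- (cmod z)\<^sup>2) / pi) * indicator (ball 0 (sqrt s)) z \<le> ennreal (1 / pi) * indicator (ball 0 (sqrt s)) z"
      by (intro mult_right_mono ennreal_leI) auto
  qed
  also have "\<dots> = ennreal (1/pi) * ennreal (pi * s)"
    using assms by (simp add: nn_integral_cmult_indicator ball_vol_c)
  also have "\<dots> = ennreal s" using assms by (simp add: ennreal_mult'[symmetric])
  finally show ?thesis .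
qed

lemma CN01_lower: assumes "s \<ge> 0" shows "ennreal (s * exp (-s)) \<le> emeasure CN01 {z. (cmod z)\<^sup>2 < s}"
proof -
  have "ennreal (s * exp (-s)) = ennreal (exp (-s) / pi) * ennreal (pi * s)"
    using assms by (simp add: ennreal_mult'[symmetric])
  also have "\<dots> = (\<integral>\<^sup>+(z::complex). ennreal (exp (-s) / pi) * indicator (ball 0 (sqrt s)) z \<partial>lborel)"
    using assms by (simp add: nn_integral_cmult_indicator ball_vol_c[OF assms])
  also have "\<dots> \<le> (\<integral>\<^sup>+(z::complex). ennreal (exp (- (cmod z)\<^sup>2) / pi) * indicator (ball 0 (sqrt s)) z \<partial>lborel)"
  proof (intro nn_integral_mono)
    fix z :: complex
    show "ennreal (exp (-s) / pi) * indicator (ball 0 (sqrt s)) z \<le> ennreal (exp (- (cmod z)\<^sup>2) / pi) * indicator (ball 0 (sqrt s)) z"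
    proof (cases "z \<in> ball 0 (sqrt s)")
      case True
      then have "(cmod z)\<^sup>2 < s" using set_sq[OF assms] by auto
      then show ?thesis using True by (auto intro!: ennreal_leI divide_right_mono)
    qed auto
  qed
  also have "\<dots> = emeasure CN01 {z. (cmod z)\<^sup>2 < s}"
    using assms by (simp add: CN01_def emeasure_density set_sq)
  finally show ?thesis .
qed

lemma sets_CN01[measurable_cong]: "sets CN01 = sets borel"
  by (simp add: CN01_def)

lemma sets_U[measurable_cong]: "sets (disc_uniform RD) = sets borel"
  by (simp add: disc_uniform_def)

lemma cball_vol_c: "r \<ge> 0 \<Longrightarrow> emeasure lborel (cball (0::complex) r) = ennreal (pi * r\<^sup>2)"
  by (subst emeasure_cball) (auto simp: uv2)

lemma U_prob: "RD > 0 \<Longrightarrow> prob_space (disc_uniform RD)"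
  unfolding disc_uniform_def
  by (rule prob_space_uniform_measure) (auto simp: cball_vol_c)

lemma U_out: "RD > 0 \<Longrightarrow> measure (disc_uniform RD) (- cball 0 RD) = 0"
proof -
  have "emeasure (uniform_measure lborel (cball (0::complex) RD)) (-cball 0 RD) = emeasure lborel (cball 0 RD \<inter> - cball 0 RD)/emeasure lborel (cball (0::complex) RD)"
    using emeasure_uniform_measure[of "cball (0::complex) RD" lborel "- cball 0 RD"] by simp
  then show ?thesis unfolding disc_uniform_def measure_def by simp
qed

lemma Q_prob: "RD > 0 \<Longrightarrow> prob_space (CN01 \<Otimes>\<^sub>M (CN01 \<Otimes>\<^sub>M disc_uniform RD))"
  by (intro prob_space_pair CN01_prob U_prob)

lemma relay_prob: "RD > 0 \<Longrightarrow> prob_space (relay_space RD)"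
  unfolding relay_space_def by (intro prob_space_pair CN01_prob Q_prob)

lemma sets_relay: "sets (relay_space RD) = sets (borel \<Otimes>\<^sub>M (borel \<Otimes>\<^sub>M (borel \<Otimes>\<^sub>M (borel::complex measure))))"
  unfolding relay_space_def by (intro sets_pair_measure_cong sets_CN01 sets_U)

lemma space_relay: "space (relay_space RD) = UNIV"
  unfolding relay_space_def by (simp add: space_pair_measure CN01_def disc_uniform_def)

lemma pair_meas:
  assumes "prob_space M" "prob_space N" "A \<in> sets M" "B \<in> sets N"
  shows "measure (M \<Otimes>\<^sub>M N) (A \<times> B) = measure M A * measure N B"
proof -
  interpret N: prob_space N by fact
  interpret M: prob_space M by fact
  show ?thesis
    using N.emeasure_pair_measure_Times[OF assms(3,4)]
    unfolding measure_def[of "M \<Otimes>\<^sub>M N"]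
    by (simp add: M.emeasure_eq_measure N.emeasure_eq_measure ennreal_mult''[symmetric])
qed

lemma rect:
  assumes "RD > 0" "A \<in> sets borel" "B \<in> sets borel" "C \<in> sets borel" "D \<in> sets borel"
  shows "measure (relay_space RD) (A \<times> (B \<times> (C \<times> D))) =
     measure CN01 A * measure CN01 B * measure CN01 C * measure (disc_uniform RD) D"
  unfolding relay_space_def using assms
  by (simp add: pair_meas CN01_prob U_prob Q_prob prob_space_pair sets_CN01 sets_U)

definition As :: "real \<Rightarrow> complex set" where "As s = {z. (cmod z)\<^sup>2 < s}"

lemma As_sets[measurable]: "As s \<in> sets borel"
  unfolding As_def by (intro borel_open open_Collect_less) (auto intro!: continuous_intros)

lemma Fm_le: "s \<ge> 0 \<Longrightarrow> measure CN01 (As s) \<le> s"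
proof -
  assume s: "s \<ge> 0"
  interpret prob_space CN01 by (rule CN01_prob)
  show ?thesis using CN01_upper[OF s] unfolding As_def
    by (simp add: emeasure_eq_measure s)
qed

lemma Fm_ge: "s \<ge> 0 \<Longrightarrow> s * exp (-s) \<le> measure CN01 (As s)"
proof -
  assume s: "s \<ge> 0"
  interpret prob_space CN01 by (rule CN01_prob)
  show ?thesis using CN01_lower[OF s] unfolding As_def
    by (simp add: emeasure_eq_measure s)
qed

lemma CN01_UNIV: "measure CN01 UNIV = 1"
proof -
  interpret prob_space CN01 by (rule CN01_prob)
  show ?thesis using prob_space by (simp add: CN01_def)
qed

lemma U_UNIV: "RD > 0 \<Longrightarrow> measure (disc_uniform RD) UNIV = 1"
proof -
  assume "RD > 0"
  then interpret prob_space "disc_uniform RD" by (rule U_prob)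
  show ?thesis using prob_space by (simp add: disc_uniform_def)
qed

lemma dyadic: "0 < c \<Longrightarrow> c < 1 \<Longrightarrow> (1/2::real)^m \<le> c \<Longrightarrow> \<exists>k\<in>{1..m}. (1/2)^k \<le> c \<and> c < 2*(1/2)^k"
proof (induction m)
  case 0 then show ?case by simp
next
  case (Suc m)
  show ?case
  proof (cases "(1/2::real)^m \<le> c")
    case True
    then obtain k where "k \<in> {1..m}" "(1/2)^k \<le> c \<and> c < 2*(1/2)^k" using Suc by blast
    then show ?thesis by auto
  next
    case False
    then show ?thesis using Suc.prems by (intro bexI[of _ "Suc m"]) auto
  qed
qed

lemma cover_arith:
  fixes b c u L \<epsilon> t :: real
  assumes "c \<ge> 0" "u > 0" "c*u < t" "b \<le> L*(\<epsilon>+u)" "L > 0" "(1/2)^m \<le> t"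
  shows "b < L*(\<epsilon>+t) \<or> c < (1/2)^m \<or> (\<exists>k\<in>{1..m}. b < L*(\<epsilon> + t*2^k) \<and> c < 2*(1/2)^k)"
proof (cases "c \<ge> 1")
  case True
  then have "u \<le> c*u" using assms by (simp add: mult_le_cancel_right1)
  then have "u < t" using assms by linarith
  then have "b < L*(\<epsilon>+t)" using assms by (smt (verit) mult_strict_left_mono)
  then show ?thesis by simp
next
  case False
  show ?thesis
  proof (cases "c < (1/2)^m")
    case True then show ?thesis by simp
  next
    case F2: False
    have "(0::real) < (1/2)^m" by simp
    then have "c > 0" using F2 by linarith
    then obtain k where k: "k \<in> {1..m}" "(1/2)^k \<le> c" "c < 2*(1/2)^k"
      using dyadic[of c m] False F2 by auto
    have "(1/2)^k * u \<le> c * u" using k assms by (intro mult_right_mono) auto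
    then have "(1/2)^k * u < t" using assms by linarith
    then have "u < t * 2^k" by (simp add: field_simps power_divide)
    then have "b < L*(\<epsilon> + t*2^k)" using assms by (smt (verit) mult_strict_left_mono)
    then show ?thesis using k by blast
  qed
qed

lemma E1_cover:
  fixes d RD \<eta> \<epsilon> :: real and m :: nat
  assumes "d > 0" "RD > 0" "\<eta> > 0" "\<epsilon> > 0" "(1/2)^m \<le> (1+d\<^sup>2)*\<epsilon>/\<eta>"
  shows "{\<omega>. x0 d \<omega> + \<eta> * yi d \<omega> * (xi \<omega> - \<epsilon>) < \<epsilon> \<and> xi \<omega> > \<epsilon>} \<subseteq>
    (As ((1+d\<^sup>2)*\<epsilon>) \<times> (As ((1+RD\<^sup>2)*(\<epsilon>+(1+d\<^sup>2)*\<epsilon>/\<eta>)) \<times> UNIV))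
    \<union> (As ((1+d\<^sup>2)*\<epsilon>) \<times> (UNIV \<times> (As ((1/2)^m) \<times> UNIV)))
    \<union> (\<Union>k\<in>{1..m}. As ((1+d\<^sup>2)*\<epsilon>) \<times> (As ((1+RD\<^sup>2)*(\<epsilon>+(1+d\<^sup>2)*\<epsilon>/\<eta>*2^k)) \<times> (As (2*(1/2)^k) \<times> UNIV)))
    \<union> (UNIV \<times> (UNIV \<times> (UNIV \<times> - cball 0 RD)))" (is "?E \<subseteq> ?R")
proof
  fix \<omega> assume om: "\<omega> \<in> {\<omega>. x0 d \<omega> + \<eta> * yi d \<omega> * (xi \<omega> - \<epsilon>) < \<epsilon> \<and> xi \<omega> > \<epsilon>}"
  obtain hd hi g z where w: "\<omega> = (hd, hi, g, z)" by (cases \<omega>) auto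
  define K where "K = 1 + d\<^sup>2"
  define L where "L = 1 + RD\<^sup>2"
  define t where "t = K*\<epsilon>/\<eta>"
  define a where "a = (cmod hd)\<^sup>2"
  define b where "b = (cmod hi)\<^sup>2"
  define c where "c = (cmod g)\<^sup>2"
  define W where "W = 1 + (cmod z)\<^sup>2"
  define x where "x = b / W"
  have K: "K > 0" "K \<ge> 1" unfolding K_def using zero_le_power2[of d] by linarith+
  have L: "L > 0" unfolding L_def using zero_le_power2[of RD] by linarith
  have W: "W \<ge> 1" unfolding W_def using zero_le_power2[of "cmod z"] by linarith
  have abc: "a \<ge> 0" "b \<ge> 0" "c \<ge> 0" unfolding a_def b_def c_def by auto
  have x0e: "x0 d \<omega> = a / K" and xie: "xi \<omega> = x" and yie: "yi d \<omega> = c / K"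
    unfolding w x0_def xi_def yi_def a_def b_def c_def K_def x_def W_def by auto
  have h1: "a/K + \<eta> * (c/K) * (x - \<epsilon>) < \<epsilon>" and h2: "x > \<epsilon>"
    using om by (simp_all add: x0e xie yie)
  define u where "u = x - \<epsilon>"
  have u: "u > 0" using h2 unfolding u_def by simp
  have nn: "\<eta> * (c/K) * u \<ge> 0" using abc K u assms by simp
  have "a/K < \<epsilon>" using h1 nn unfolding u_def by linarith
  then have ha: "a < K*\<epsilon>" using K by (simp add: field_simps)
  have "\<eta> * (c/K) * u < \<epsilon>" using h1 abc K unfolding u_def by (smt (verit) divide_nonneg_nonneg)
  then have hc: "c*u < t" unfolding t_def using K assms by (simp add: field_simps)
  show "\<omega> \<in> ?R"
  proof (cases "z \<in> cball 0 RD")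
    case False then show ?thesis unfolding w by auto
  next
    case True
    then have "(cmod z)\<^sup>2 \<le> RD\<^sup>2" using assms by (intro power_mono) auto
    then have "W \<le> L" unfolding W_def L_def by simp
    have "b = x * W" unfolding x_def using W by simp
    also have "\<dots> \<le> x * L" using \<open>W \<le> L\<close> h2 assms by (intro mult_left_mono) auto
    finally have hb: "b \<le> L*(\<epsilon>+u)" by (simp add: mult.commute u_def)
    have m: "(1/2)^m \<le> t" using assms unfolding t_def K_def by simp
    from cover_arith[OF abc(3) u hc hb L m]
    have "b < L*(\<epsilon>+t) \<or> c < (1/2)^m \<or> (\<exists>k\<in>{1..m}. b < L*(\<epsilon> + t*2^k) \<and> c < 2*(1/2)^k)" .
    then show ?thesis using ha unfolding w As_def a_def b_def c_def K_def L_def t_def by auto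
  qed
qed

lemma E2_cover:
  fixes d RD \<epsilon> :: real
  assumes "d > 0" "RD > 0" "\<epsilon> > 0"
  shows "{\<omega>. x0 d \<omega> < \<epsilon> \<and> xi \<omega> < \<epsilon>} \<subseteq>
    (As ((1+d\<^sup>2)*\<epsilon>) \<times> (As ((1+RD\<^sup>2)*\<epsilon>) \<times> UNIV)) \<union> (UNIV \<times> (UNIV \<times> (UNIV \<times> - cball 0 RD)))" (is "?E \<subseteq> ?R")
proof
  fix \<omega> assume om: "\<omega> \<in> {\<omega>. x0 d \<omega> < \<epsilon> \<and> xi \<omega> < \<epsilon>}"
  obtain hd hi g z where w: "\<omega> = (hd, hi, g, z)" by (cases \<omega>) auto
  define K where "K = 1 + d\<^sup>2"
  define L where "L = 1 + RD\<^sup>2"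
  define a where "a = (cmod hd)\<^sup>2"
  define b where "b = (cmod hi)\<^sup>2"
  define W where "W = 1 + (cmod z)\<^sup>2"
  define x where "x = b / W"
  have K: "K > 0" unfolding K_def using zero_le_power2[of d] by linarith
  have W: "W \<ge> 1" unfolding W_def using zero_le_power2[of "cmod z"] by linarith
  have x0e: "x0 d \<omega> = a / K" and xie: "xi \<omega> = x"
    unfolding w x0_def xi_def a_def b_def K_def x_def W_def by auto
  have "a/K < \<epsilon>" "x < \<epsilon>" using om x0e xie by auto
  then have ha: "a < K*\<epsilon>" using K by (simp add: field_simps)
  show "\<omega> \<in> ?R"
  proof (cases "z \<in> cball 0 RD")
    case False then show ?thesis unfolding w by auto
  next
    case True
    then have "(cmod z)\<^sup>2 \<le> RD\<^sup>2" using assms by (intro power_mono) auto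
    then have "W \<le> L" unfolding W_def L_def by simp
    have L: "L > 0" unfolding L_def using zero_le_power2[of RD] by linarith
    have "x \<ge> 0" unfolding x_def b_def using W by simp
    have "b = x * W" unfolding x_def using W by simp
    also have "\<dots> \<le> x * L" using \<open>W \<le> L\<close> \<open>x \<ge> 0\<close> by (intro mult_left_mono) auto
    also have "\<dots> < \<epsilon> * L" using \<open>x < \<epsilon>\<close> L by (intro mult_strict_right_mono) auto
    finally have hb: "b < L*\<epsilon>" by (simp add: mult.commute)
    then show ?thesis using ha unfolding w As_def a_def b_def K_def L_def by auto
  qed
qed

lemma E2_lower:
  fixes d RD \<epsilon> :: real
  shows "As \<epsilon> \<times> (As \<epsilon> \<times> (UNIV :: (complex \<times> complex) set)) \<subseteq> {\<omega>. x0 d \<omega> < \<epsilon> \<and> xi \<omega> < \<epsilon>}"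
proof
  fix \<omega> :: "complex \<times> complex \<times> complex \<times> complex" assume om: "\<omega> \<in> As \<epsilon> \<times> (As \<epsilon> \<times> UNIV)"
  obtain hd hi g z where w: "\<omega> = (hd, hi, g, z)" by (cases \<omega>) auto
  have a: "(cmod hd)\<^sup>2 < \<epsilon>" "(cmod hi)\<^sup>2 < \<epsilon>" using om unfolding w As_def by auto
  have "(cmod hd)\<^sup>2 / (1 + d\<^sup>2) \<le> (cmod hd)\<^sup>2 / 1" by (intro divide_left_mono) (auto intro: add_pos_nonneg)
  moreover have "(cmod hi)\<^sup>2 / (1 + (cmod z)\<^sup>2) \<le> (cmod hi)\<^sup>2 / 1" by (intro divide_left_mono) (auto intro: add_pos_nonneg)
  ultimately show "\<omega> \<in> {\<omega>. x0 d \<omega> < \<epsilon> \<and> xi \<omega> < \<epsilon>}"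
    using a unfolding w x0_def xi_def by auto
qed

lemma rect_sets: "A \<in> sets borel \<Longrightarrow> B \<in> sets borel \<Longrightarrow> C \<in> sets borel \<Longrightarrow> D \<in> sets borel \<Longrightarrow>
   A \<times> (B \<times> (C \<times> D)) \<in> sets (relay_space RD)"
  unfolding sets_relay by (intro pair_measureI) auto

lemma rect_le:
  assumes "RD > 0" "A \<in> sets borel" "B \<in> sets borel" "C \<in> sets borel" "D \<in> sets borel"
    "measure CN01 A \<le> \<alpha>" "measure CN01 B \<le> \<beta>" "measure CN01 C \<le> \<gamma>" "measure (disc_uniform RD) D \<le> \<delta>"
  shows "measure (relay_space RD) (A \<times> (B \<times> (C \<times> D))) \<le> \<alpha> * \<beta> * \<gamma> * \<delta>"
  unfolding rect[OF assms(1-5)]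
  using assms(6-9) by (intro mult_mono) (auto intro: order.trans[OF measure_nonneg] mult_nonneg_nonneg)

lemma As_le: "s \<ge> 0 \<Longrightarrow> measure CN01 (As s) \<le> s" by (rule Fm_le)

lemma E1_meas:
  fixes d RD \<eta> \<epsilon> :: real and m :: nat
  assumes "d > 0" "RD > 0" "\<eta> > 0" "\<epsilon> > 0" "(1/2)^m \<le> (1+d\<^sup>2)*\<epsilon>/\<eta>"
  defines "K \<equiv> 1+d\<^sup>2" and "L \<equiv> 1+RD\<^sup>2" and "t \<equiv> (1+d\<^sup>2)*\<epsilon>/\<eta>"
  shows "measure (relay_space RD) {\<omega>. x0 d \<omega> + \<eta> * yi d \<omega> * (xi \<omega> - \<epsilon>) < \<epsilon> \<and> xi \<omega> > \<epsilon>}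
    \<le> K*\<epsilon>*(L*(\<epsilon>+t)) + K*\<epsilon>*(1/2)^m + (\<Sum>k\<in>{1..m}. K*\<epsilon>*(L*(\<epsilon>+t*2^k))*(2*(1/2)^k))"
proof -
  interpret prob_space "relay_space RD" using assms by (intro relay_prob)
  have K: "K > 0" unfolding K_def using zero_le_power2[of d] by linarith
  have L: "L > 0" unfolding L_def using zero_le_power2[of RD] by linarith
  have t: "t > 0" unfolding t_def using assms K[unfolded K_def] by simp
  define R0 where "R0 = As (K*\<epsilon>) \<times> (As (L*(\<epsilon>+t)) \<times> ((UNIV::complex set) \<times> (UNIV::complex set)))"
  define Rs where "Rs = As (K*\<epsilon>) \<times> ((UNIV::complex set) \<times> (As ((1/2)^m) \<times> (UNIV::complex set)))"
  define Rk where "Rk = (\<lambda>k::nat. As (K*\<epsilon>) \<times> (As (L*(\<epsilon>+t*2^k)) \<times> (As (2*(1/2)^k) \<times> (UNIV::complex set))))"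
  define Zc where "Zc = (UNIV::complex set) \<times> ((UNIV::complex set) \<times> ((UNIV::complex set) \<times> - cball (0::complex) RD))"
  have sR0: "R0 \<in> sets (relay_space RD)" unfolding R0_def by (intro rect_sets) auto
  have sRs: "Rs \<in> sets (relay_space RD)" unfolding Rs_def by (intro rect_sets) auto
  have sRk: "Rk k \<in> sets (relay_space RD)" for k unfolding Rk_def by (intro rect_sets) auto
  have sZc: "Zc \<in> sets (relay_space RD)" unfolding Zc_def by (intro rect_sets) auto
  have sU: "(\<Union>k\<in>{1..m}. Rk k) \<in> sets (relay_space RD)" using sRk by auto
  have sub: "{\<omega>. x0 d \<omega> + \<eta> * yi d \<omega> * (xi \<omega> - \<epsilon>) < \<epsilon> \<and> xi \<omega> > \<epsilon>} \<subseteq> R0 \<union> Rs \<union> (\<Union>k\<in>{1..m}. Rk k) \<union> Zc"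
    using E1_cover[OF assms(1-5)] unfolding R0_def Rs_def Rk_def Zc_def K_def L_def t_def by simp
  have "measure (relay_space RD) {\<omega>. x0 d \<omega> + \<eta> * yi d \<omega> * (xi \<omega> - \<epsilon>) < \<epsilon> \<and> xi \<omega> > \<epsilon>}
      \<le> measure (relay_space RD) (R0 \<union> Rs \<union> (\<Union>k\<in>{1..m}. Rk k) \<union> Zc)"
    using sub sR0 sRs sU sZc by (intro finite_measure_mono) auto
  also have "\<dots> \<le> measure (relay_space RD) R0 + measure (relay_space RD) Rs + measure (relay_space RD) (\<Union>k\<in>{1..m}. Rk k) + measure (relay_space RD) Zc"
    using sR0 sRs sU sZc
    by (smt (verit, best) measure_Un_le sets.Un)
  also have "measure (relay_space RD) (\<Union>k\<in>{1..m}. Rk k) \<le> (\<Sum>k\<in>{1..m}. measure (relay_space RD) (Rk k))"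
    using sRk by (intro finite_measure_subadditive_finite) auto
  also have "measure (relay_space RD) Zc \<le> 1 * 1 * 1 * 0"
    unfolding Zc_def using assms by (intro rect_le) (auto simp: CN01_UNIV U_out)
  also have "measure (relay_space RD) R0 \<le> K*\<epsilon> * (L*(\<epsilon>+t)) * 1 * 1"
    unfolding R0_def using assms K L t by (intro rect_le) (auto simp: CN01_UNIV U_UNIV intro!: As_le)
  also have "measure (relay_space RD) Rs \<le> K*\<epsilon> * 1 * (1/2)^m * 1"
    unfolding Rs_def using assms K L t by (intro rect_le) (auto simp: CN01_UNIV U_UNIV intro!: As_le)
  also have "(\<Sum>k\<in>{1..m}. measure (relay_space RD) (Rk k)) \<le> (\<Sum>k\<in>{1..m}. K*\<epsilon>*(L*(\<epsilon>+t*2^k))*(2*(1/2)^k) * 1)"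
    unfolding Rk_def using assms K L t by (intro sum_mono rect_le) (auto simp: CN01_UNIV U_UNIV intro!: As_le)
  finally show ?thesis by simp
qed

lemma E2_sets: "{\<omega>. x0 d \<omega> < \<epsilon> \<and> xi \<omega> < \<epsilon>} \<in> sets (relay_space RD)"
proof -
  have "{\<omega> \<in> space (borel \<Otimes>\<^sub>M (borel \<Otimes>\<^sub>M (borel \<Otimes>\<^sub>M (borel::complex measure)))). x0 d \<omega> < \<epsilon> \<and> xi \<omega> < \<epsilon>}
     \<in> sets (borel \<Otimes>\<^sub>M (borel \<Otimes>\<^sub>M (borel \<Otimes>\<^sub>M (borel::complex measure))))"
    unfolding x0_def xi_def by measurable
  then show ?thesis unfolding sets_relay by (simp add: space_pair_measure)
qed

lemma E2_meas_upper:
  fixes d RD \<epsilon> :: real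
  assumes "d > 0" "RD > 0" "\<epsilon> > 0"
  shows "measure (relay_space RD) {\<omega>. x0 d \<omega> < \<epsilon> \<and> xi \<omega> < \<epsilon>} \<le> (1+d\<^sup>2)*\<epsilon> * ((1+RD\<^sup>2)*\<epsilon>)"
proof -
  interpret prob_space "relay_space RD" using assms by (intro relay_prob)
  define R0 where "R0 = As ((1+d\<^sup>2)*\<epsilon>) \<times> (As ((1+RD\<^sup>2)*\<epsilon>) \<times> ((UNIV::complex set) \<times> (UNIV::complex set)))"
  define Zc where "Zc = (UNIV::complex set) \<times> ((UNIV::complex set) \<times> ((UNIV::complex set) \<times> - cball (0::complex) RD))"
  have sR0: "R0 \<in> sets (relay_space RD)" unfolding R0_def by (intro rect_sets) auto
  have sZc: "Zc \<in> sets (relay_space RD)" unfolding Zc_def by (intro rect_sets) auto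
  have "measure (relay_space RD) {\<omega>. x0 d \<omega> < \<epsilon> \<and> xi \<omega> < \<epsilon>} \<le> measure (relay_space RD) (R0 \<union> Zc)"
    using E2_cover[OF assms] sR0 sZc unfolding R0_def Zc_def by (intro finite_measure_mono) auto
  also have "\<dots> \<le> measure (relay_space RD) R0 + measure (relay_space RD) Zc"
    using sR0 sZc by (rule measure_Un_le)
  also have "measure (relay_space RD) Zc \<le> 1 * 1 * 1 * 0"
    unfolding Zc_def using assms by (intro rect_le) (auto simp: CN01_UNIV U_out)
  also have "measure (relay_space RD) R0 \<le> (1+d\<^sup>2)*\<epsilon> * ((1+RD\<^sup>2)*\<epsilon>) * 1 * 1"
    unfolding R0_def using assms
    by (intro rect_le) (auto simp: CN01_UNIV U_UNIV intro!: As_le add_nonneg_nonneg)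
  finally show ?thesis by simp
qed

lemma E2_meas_lower:
  fixes d RD \<epsilon> :: real
  assumes "RD > 0" "\<epsilon> > 0"
  shows "(\<epsilon> * exp (-\<epsilon>))\<^sup>2 \<le> measure (relay_space RD) {\<omega>. x0 d \<omega> < \<epsilon> \<and> xi \<omega> < \<epsilon>}"
proof -
  interpret prob_space "relay_space RD" using assms by (intro relay_prob)
  have "measure (relay_space RD) (As \<epsilon> \<times> (As \<epsilon> \<times> ((UNIV::complex set) \<times> (UNIV::complex set))))
       = measure CN01 (As \<epsilon>) * measure CN01 (As \<epsilon>) * 1 * 1"
    using assms by (subst rect) (auto simp: CN01_UNIV U_UNIV)
  also have "\<dots> \<ge> (\<epsilon> * exp (-\<epsilon>)) * (\<epsilon> * exp (-\<epsilon>)) * 1 * 1"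
    using Fm_ge[of \<epsilon>] assms by (intro mult_mono) auto
  finally have "(\<epsilon> * exp (-\<epsilon>))\<^sup>2 \<le> measure (relay_space RD) (As \<epsilon> \<times> (As \<epsilon> \<times> ((UNIV::complex set) \<times> (UNIV::complex set))))"
    by (simp add: power2_eq_square)
  also have "\<dots> \<le> measure (relay_space RD) {\<omega>. x0 d \<omega> < \<epsilon> \<and> xi \<omega> < \<epsilon>}"
    using E2_lower[of \<epsilon> d] E2_sets by (intro finite_measure_mono) auto
  finally show ?thesis .
qed

lemma upper_bound:
  fixes d RD \<eta> \<epsilon> :: real
  assumes "d > 0" "RD > 0" "0 < \<eta>" "\<eta> \<le> 1" "\<epsilon> > 0" "(1+d\<^sup>2)*\<epsilon>/\<eta> \<le> 1"
  shows "measure (relay_space RD) {\<omega>. x0 d \<omega> + \<eta> * yi d \<omega> * (xi \<omega> - \<epsilon>) < \<epsilon> \<and> xi \<omega> > \<epsilon>}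
       + measure (relay_space RD) {\<omega>. x0 d \<omega> < \<epsilon> \<and> xi \<omega> < \<epsilon>}
    \<le> (1+d\<^sup>2)*\<epsilon>*(2*(1+RD\<^sup>2)*((1+d\<^sup>2)*\<epsilon>/\<eta>) + (1+d\<^sup>2)*\<epsilon>/\<eta>
         + 4*(1+RD\<^sup>2)*((1+d\<^sup>2)*\<epsilon>/\<eta>)*(log 2 (1/((1+d\<^sup>2)*\<epsilon>/\<eta>)) + 1))
       + (1+d\<^sup>2)*(1+RD\<^sup>2)*\<epsilon>\<^sup>2"
proof -
  define K where "K = 1 + d\<^sup>2"
  define L where "L = 1 + RD\<^sup>2"
  define t where "t = K*\<epsilon>/\<eta>"
  have K: "K \<ge> 1" unfolding K_def by simp
  have L: "L \<ge> 1" unfolding L_def by simp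
  have t: "t > 0" "t \<le> 1" unfolding t_def using assms K unfolding K_def by (auto intro!: divide_pos_pos mult_pos_pos add_pos_nonneg)
  have et: "\<epsilon> \<le> t"
  proof -
    have "\<epsilon> \<le> K*\<epsilon>" using K assms by simp
    also have "\<dots> \<le> K*\<epsilon>/\<eta>" using assms K by (simp add: le_divide_eq)
    finally show ?thesis unfolding t_def .
  qed
  define y where "y = log 2 (1/t)"
  have y: "y \<ge> 0" unfolding y_def using t by simp
  define m where "m = nat \<lceil>y\<rceil>"
  have my: "real m \<ge> y" "real m \<le> y + 1" unfolding m_def using y by linarith+
  have "1/t = 2 powr y" unfolding y_def using t by simp
  also have "\<dots> \<le> 2 powr (real m)" using my by (intro powr_mono) auto
  also have "\<dots> = 2^m" by (simp add: powr_realpow)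
  finally have "1/t \<le> 2^m" .
  then have hm: "(1/2)^m \<le> t" using t by (simp add: power_one_over field_simps)
  have E1: "measure (relay_space RD) {\<omega>. x0 d \<omega> + \<eta> * yi d \<omega> * (xi \<omega> - \<epsilon>) < \<epsilon> \<and> xi \<omega> > \<epsilon>}
    \<le> K*\<epsilon>*(L*(\<epsilon>+t)) + K*\<epsilon>*(1/2)^m + (\<Sum>k\<in>{1..m}. K*\<epsilon>*(L*(\<epsilon>+t*2^k))*(2*(1/2)^k))"
    using E1_meas[of d RD \<eta> \<epsilon> m] assms hm unfolding K_def L_def t_def by simp
  have trm: "K*\<epsilon>*(L*(\<epsilon>+t*2^k))*(2*(1/2)^k) \<le> K*\<epsilon>*(4*L*t)" for k :: nat
  proof -
    have eq: "K*\<epsilon>*(L*(\<epsilon>+t*2^k))*(2*(1/2)^k) = K*\<epsilon>*(2*L*(\<epsilon>*(1/2)^k + t))"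
      by (simp add: field_simps power_one_over)
    have "\<epsilon>*(1/2)^k \<le> \<epsilon>*1" using assms by (intro mult_left_mono) (auto simp: power_le_one)
    then have "\<epsilon>*(1/2)^k + t \<le> 2*t" using et by simp
    then have "2*L*(\<epsilon>*(1/2)^k + t) \<le> 2*L*(2*t)" by (rule mult_left_mono) (use L in auto)
    then have "K*\<epsilon>*(2*L*(\<epsilon>*(1/2)^k + t)) \<le> K*\<epsilon>*(2*L*(2*t))" by (rule mult_left_mono) (use K assms in auto)
    then show ?thesis unfolding eq by simp
  qed
  have "(\<Sum>k\<in>{1..m}. K*\<epsilon>*(L*(\<epsilon>+t*2^k))*(2*(1/2)^k)) \<le> real m * (K*\<epsilon>*(4*L*t))"
    using sum_bounded_above[of "{1..m}" "\<lambda>k. K*\<epsilon>*(L*(\<epsilon>+t*2^k))*(2*(1/2)^k)" "K*\<epsilon>*(4*L*t)"] trm by simp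
  also have "\<dots> \<le> (y+1) * (K*\<epsilon>*(4*L*t))" using my K L t assms by (intro mult_right_mono) auto
  finally have S: "(\<Sum>k\<in>{1..m}. K*\<epsilon>*(L*(\<epsilon>+t*2^k))*(2*(1/2)^k)) \<le> (y+1) * (K*\<epsilon>*(4*L*t))" .
  have A: "K*\<epsilon>*(L*(\<epsilon>+t)) \<le> K*\<epsilon>*(2*L*t)" using K L et assms by (intro mult_left_mono) auto
  have B: "K*\<epsilon>*(1/2)^m \<le> K*\<epsilon>*t" using K hm assms by (intro mult_left_mono) auto
  have E2: "measure (relay_space RD) {\<omega>. x0 d \<omega> < \<epsilon> \<and> xi \<omega> < \<epsilon>} \<le> K*\<epsilon>*(L*\<epsilon>)"
    using E2_meas_upper[of d RD \<epsilon>] assms unfolding K_def L_def by simp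
  have "measure (relay_space RD) {\<omega>. x0 d \<omega> + \<eta> * yi d \<omega> * (xi \<omega> - \<epsilon>) < \<epsilon> \<and> xi \<omega> > \<epsilon>}
       + measure (relay_space RD) {\<omega>. x0 d \<omega> < \<epsilon> \<and> xi \<omega> < \<epsilon>}
     \<le> K*\<epsilon>*(2*L*t) + K*\<epsilon>*t + (y+1) * (K*\<epsilon>*(4*L*t)) + K*\<epsilon>*(L*\<epsilon>)"
    using E1 E2 S A B by linarith
  also have "\<dots> = K*\<epsilon>*(2*L*t + t + 4*L*t*(y + 1)) + K*L*\<epsilon>\<^sup>2"
    by (simp add: algebra_simps power2_eq_square)
  finally show ?thesis unfolding K_def L_def t_def y_def by simp
qed

lemma limU:
  fixes \<tau> K L \<eta> :: real
  assumes "\<tau> > 0" "K > 0" "L > 0" "\<eta> > 0"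
  shows "((\<lambda>P. ln (K*(\<tau>/P)*(2*L*(K*(\<tau>/P)/\<eta>) + K*(\<tau>/P)/\<eta> + 4*L*(K*(\<tau>/P)/\<eta>)*(log 2 (1/(K*(\<tau>/P)/\<eta>)) + 1)) + K*L*(\<tau>/P)\<^sup>2) / ln P) \<longlongrightarrow> -2) at_top"
  using assms by real_asymp

lemma limL:
  fixes \<tau> :: real
  assumes "\<tau> > 0"
  shows "((\<lambda>P. ln (((\<tau>/P) * exp (-(\<tau>/P)))\<^sup>2) / ln P) \<longlongrightarrow> -2) at_top"
  using assms by real_asymp

theorem corollary1:
  fixes d RD \<eta> Rt :: real
  assumes "d > 0" and "RD > 0" and "0 < \<eta>" and "\<eta> \<le> 1" and "Rt > 0"
  shows "((\<lambda>P. - (ln (outage1 d RD \<eta> Rt P) / ln P)) \<longlongrightarrow> 2) at_top"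
proof -
  define \<tau> where "\<tau> = 2 powr (2 * Rt) - 1"
  have "(1::real) = 2 powr 0" by simp
  also have "\<dots> < 2 powr (2 * Rt)" using assms by (intro powr_less_mono) auto
  finally have \<tau>: "\<tau> > 0" unfolding \<tau>_def by simp
  define K where "K = 1 + d\<^sup>2"
  define L where "L = 1 + RD\<^sup>2"
  have K: "K > 0" unfolding K_def by (simp add: add_pos_nonneg)
  have L: "L > 0" unfolding L_def by (simp add: add_pos_nonneg)
  define U where "U = (\<lambda>P. K*(\<tau>/P)*(2*L*(K*(\<tau>/P)/\<eta>) + K*(\<tau>/P)/\<eta> + 4*L*(K*(\<tau>/P)/\<eta>)*(log 2 (1/(K*(\<tau>/P)/\<eta>)) + 1)) + K*L*(\<tau>/P)\<^sup>2)"
  define l where "l = (\<lambda>P. ((\<tau>/P) * exp (-(\<tau>/P)))\<^sup>2)"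
  define Ou where "Ou = (\<lambda>P. outage1 d RD \<eta> Rt P)"
  have ev: "eventually (\<lambda>P. l P \<le> Ou P \<and> Ou P \<le> U P \<and> l P > 0 \<and> ln P > 0) at_top"
    using eventually_ge_at_top[of "max 2 (K*\<tau>/\<eta>)"]
  proof eventually_elim
    case (elim P)
    then have P: "P \<ge> 2" "P \<ge> K*\<tau>/\<eta>" by auto
    define \<epsilon> where "\<epsilon> = \<tau>/P"
    have e: "\<epsilon> > 0" unfolding \<epsilon>_def using P \<tau> by simp
    have "K*\<tau>/\<eta> \<le> P" using P by simp
    then have "K*\<tau> \<le> P * \<eta>" using assms by (simp add: divide_le_eq)
    then have te: "K*\<epsilon>/\<eta> \<le> 1" unfolding \<epsilon>_def using P assms by (simp add: field_simps)
    have Oe: "Ou P = measure (relay_space RD) {\<omega>. x0 d \<omega> + \<eta> * yi d \<omega> * (xi \<omega> - \<epsilon>) < \<epsilon> \<and> xi \<omega> > \<epsilon>}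
       + measure (relay_space RD) {\<omega>. x0 d \<omega> < \<epsilon> \<and> xi \<omega> < \<epsilon>}"
      unfolding Ou_def outage1_def \<epsilon>_def \<tau>_def by (simp add: Let_def)
    have up: "Ou P \<le> U P"
      unfolding Oe U_def using upper_bound[of d RD \<eta> \<epsilon>] assms e te unfolding K_def L_def \<epsilon>_def
      by simp
    have lo: "l P \<le> Ou P"
      unfolding Oe l_def using E2_meas_lower[of RD \<epsilon> d] assms e unfolding \<epsilon>_def
      by (smt (verit) measure_nonneg)
    have lp: "l P > 0" unfolding l_def using e \<epsilon>_def \<tau> P by simp
    have "ln P > 0" using P by simp
    then show ?case using up lo lp by simp
  qed
  have ev2: "eventually (\<lambda>P. - (ln (U P) / ln P) \<le> - (ln (Ou P) / ln P) \<and> - (ln (Ou P) / ln P) \<le> - (ln (l P) / ln P)) at_top"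
    using ev
  proof eventually_elim
    case (elim P)
    then have "ln (l P) \<le> ln (Ou P)" "ln (Ou P) \<le> ln (U P)" by auto
    then have "ln (l P) / ln P \<le> ln (Ou P) / ln P" "ln (Ou P) / ln P \<le> ln (U P) / ln P"
      using elim by (auto intro: divide_right_mono)
    then show ?case by simp
  qed
  have l1: "((\<lambda>P. - (ln (U P) / ln P)) \<longlongrightarrow> 2) at_top"
    using tendsto_minus[OF limU[OF \<tau> K L assms(3)]] unfolding U_def by simp
  have l2: "((\<lambda>P. - (ln (l P) / ln P)) \<longlongrightarrow> 2) at_top"
    using tendsto_minus[OF limL[OF \<tau>]] unfolding l_def by simp
  have "((\<lambda>P. - (ln (Ou P) / ln P)) \<longlongrightarrow> 2) at_top"
    by (rule tendsto_sandwich[OF _ _ l1 l2]) (use ev2 in \<open>auto elim: eventually_mono\<close>)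
  then show ?thesis unfolding Ou_def .
qed

end
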